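(* Let $n\ge1$. There exist constants $\delta_0\in(0,1)$, $C_n>0$ and $C'_n>0$ such that for all $k\in\mathbb N_0$ and $\lambda\in\mathbb R\setminus\{0\}$ with $\mu|\lambda|\le\delta_0$, where $\mu=2(2k+n)$, $$\big|R_k(\lambda,\sigma)-C_n\big|\le C'_n\,(\mu|\lambda|)^{1/2}.$$
   Context: For $\beta>-1$ and $k\in\mathbb N_0$ the Laguerre polynomial $L_k^\beta$ is defined by $e^{-r}r^{\beta}L_k^\beta(r)=\frac1{k!}\frac{d^k}{dr^k}\big(e^{-r}r^{k+\beta}\big)$. For $n\ge1$, $k\in\mathbb N_0$, $\lambda\in\mathbb R$, set $c_n=\frac{\Gamma(\frac{n+1}2)\Gamma(n)}{\sqrt\pi\,\Gamma(\frac n2)}$ and $$R_k(\lambda,\sigma)=c_n\frac{\Gamma(k+1)}{\Gamma(k+n)}\int_{-\pi/2}^{\pi/2}L_k^{n-1}\!\big(\tfrac12|\lambda|\cos\theta\big)\,e^{-\frac14|\lambda|\cos\theta}\,e^{\frac i4\lambda\sin\theta}\,(\cos\theta)^{n-1}\,d\theta .$$ *)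

theory Defs
  imports "HOL-Analysis.Analysis"
begin

text \<open>Laguerre polynomial via the Rodrigues formula
  e^{-r} r^beta L_k^beta(r) = (1/k!) d^k/dr^k (e^{-r} r^{k+beta}), for r > 0.\<close>
definition laguerre :: "nat \<Rightarrow> real \<Rightarrow> real \<Rightarrow> real" where
  "laguerre k \<beta> r =
     exp r * r powr (-\<beta>) / fact k *
     (deriv ^^ k) (\<lambda>s. exp (-s) * s powr (real k + \<beta>)) r"

definition c_const :: "nat \<Rightarrow> real" where
  "c_const n = Gamma ((real n + 1) / 2) * Gamma (real n) / (sqrt pi * Gamma (real n / 2))"

definition R_fun :: "nat \<Rightarrow> nat \<Rightarrow> real \<Rightarrow> complex" where
  "R_fun n k lam =
     complex_of_real (c_const n * Gamma (real k + 1) / Gamma (real k + real n)) *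
     integral {-pi/2..pi/2} (\<lambda>\<theta>.
        complex_of_real (laguerre k (real n - 1) (\<bar>lam\<bar> * cos \<theta> / 2)
          * exp (- \<bar>lam\<bar> * cos \<theta> / 4) * (cos \<theta>) ^ (n - 1))
        * cis (lam * sin \<theta> / 4))"

end

theory Submission
  imports Defs
begin

definition ff :: "nat \<Rightarrow> nat \<Rightarrow> real" where "ff m i = (\<Prod>t<i. real (m - t))"
definition gpoly :: "nat \<Rightarrow> nat \<Rightarrow> real \<Rightarrow> real" where
  "gpoly m j s = (\<Sum>i\<le>j. real (j choose i) * (-1)^(j+i) * (ff m i * s^(m-i)))"

lemma gpoly_deriv:
  "((gpoly m j) has_real_derivative
     (\<Sum>i\<le>j. real (j choose i) * (-1)^(j+i) * (ff m (Suc i) * s^(m - Suc i)))) (at s)"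
proof -
  have "((gpoly m j) has_real_derivative
     (\<Sum>i\<le>j. real (j choose i) * (-1)^(j+i) * (ff m i * (real (m-i) * s^(m-i - 1))))) (at s)"
    unfolding gpoly_def[abs_def]
    by (auto intro!: derivative_eq_intros sum.cong simp: algebra_simps)
  moreover have "(\<Sum>i\<le>j. real (j choose i) * (-1)^(j+i) * (ff m i * (real (m-i) * s^(m-i - 1)))) =
     (\<Sum>i\<le>j. real (j choose i) * (-1)^(j+i) * (ff m (Suc i) * s^(m - Suc i)))"
    by (rule sum.cong) (auto simp: ff_def)
  ultimately show ?thesis by simp
qed

lemma pascal_sum:
  fixes q :: "nat \<Rightarrow> real"
  shows "(\<Sum>i\<le>Suc j. real (Suc j choose i) * (-1)^(Suc j + i) * q i) =
    (\<Sum>i\<le>j. real (j choose i) * (-1)^(j+i) * q (Suc i)) - (\<Sum>i\<le>j. real (j choose i) * (-1)^(j+i) * q i)"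
proof -
  define G where "G i = real (j choose i) * (-1)^(j+i) * q i" for i
  have e1: "(\<Sum>i\<le>Suc j. real (Suc j choose i) * (-1)^(Suc j + i) * q i) =
     (-1)^(Suc j) * q 0 + (\<Sum>i\<le>j. real (j choose i) * (-1)^(j+i) * q (Suc i))
       + (\<Sum>i\<le>j. real (j choose Suc i) * (-1)^(j+i) * q (Suc i))"
    unfolding sum.atMost_Suc_shift by (simp add: sum.distrib algebra_simps del: sum.atMost_Suc)
  have e2: "(\<Sum>i\<le>j. real (j choose Suc i) * (-1)^(j+i) * q (Suc i)) = - (\<Sum>i\<le>j. G (Suc i))"
    by (simp add: G_def sum_negf[symmetric])
  have e3: "(\<Sum>i\<le>j. G (Suc i)) = (\<Sum>i\<le>Suc j. G i) - G 0"
    unfolding sum.atMost_Suc_shift by simp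
  have e4: "(\<Sum>i\<le>Suc j. G i) = (\<Sum>i\<le>j. G i)"
    by (simp add: G_def)
  show ?thesis using e1 e2 e3 e4 by (simp add: G_def)
qed

lemma deriv_formula:
  "s > 0 \<Longrightarrow> (deriv ^^ j) (\<lambda>s. exp (-s) * s powr real m) s = exp (-s) * gpoly m j s"
proof (induction j arbitrary: s)
  case 0
  then show ?case by (simp add: gpoly_def ff_def powr_realpow)
next
  case (Suc j)
  define gd where "gd = (\<Sum>i\<le>j. real (j choose i) * (-1)^(j+i) * (ff m (Suc i) * s^(m - Suc i)))"
  have d: "((\<lambda>x. exp (-x) * gpoly m j x) has_real_derivative
            exp (-s) * gd - exp (-s) * gpoly m j s) (at s)"
    using gpoly_deriv[of m j s] unfolding gd_def
    by (auto intro!: derivative_eq_intros)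
  have d2: "((deriv ^^ j) (\<lambda>s. exp (-s) * s powr real m) has_real_derivative
            exp (-s) * gd - exp (-s) * gpoly m j s) (at s)"
    by (rule has_field_derivative_transform_within_open[OF d, of "{0<..}"])
       (use Suc in auto)
  have "(deriv ^^ Suc j) (\<lambda>s. exp (-s) * s powr real m) s = exp (-s) * gd - exp (-s) * gpoly m j s"
    using DERIV_imp_deriv[OF d2] by simp
  also have "\<dots> = exp (-s) * gpoly m (Suc j) s"
  proof -
    have "gpoly m (Suc j) s = gd - gpoly m j s"
      unfolding gd_def gpoly_def by (rule pascal_sum[of j "\<lambda>i. ff m i * s^(m-i)"])
    then show ?thesis by (simp add: right_diff_distrib)
  qed
  finally show ?case .
qed

lemma ff_fact: "i \<le> m \<Longrightarrow> ff m i * fact (m - i) = fact m"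
proof (induction i)
  case 0 then show ?case by (simp add: ff_def)
next
  case (Suc i)
  have "m - i = Suc (m - Suc i)" using Suc.prems by simp
  then have "fact (m - i) = real (m - i) * (fact (m - Suc i) :: real)"
    by (metis fact_Suc of_nat_Suc)
  then show ?case using Suc by (simp add: ff_def)
qed

definition Qp :: "nat \<Rightarrow> nat \<Rightarrow> real \<Rightarrow> real" where
  "Qp n k x = (\<Sum>i\<le>k. real (k choose i) * (-1)^(k+i) * x^(k-i) / fact (k + (n - 1) - i))"

lemma lag_eq:
  assumes "n \<ge> 1" "r > 0"
  shows "Gamma (real k + 1) / Gamma (real k + real n) * laguerre k (real n - 1) r = Qp n k r"
proof -
  define m where "m = k + (n - 1)"
  have fe: "(\<lambda>s. exp (-s) * s powr (real k + (real n - 1))) = (\<lambda>s. exp (-s) * s powr real m)"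
    using assms(1) by (simp add: m_def of_nat_diff algebra_simps)
  have g1: "Gamma (real k + 1) = fact k"
    using Gamma_fact[of k, where 'a=real] by (simp add: add.commute)
  have g2: "Gamma (real k + real n) = fact m"
    using Gamma_fact[of m, where 'a=real] assms(1) by (simp add: m_def of_nat_diff add.commute)
  have pw: "r powr (-(real n - 1)) * r^(m-i) = r^(k-i)" if "i \<le> k" for i
  proof -
    have "m - i = (k - i) + (n - 1)" using that by (simp add: m_def)
    then have "r^(m-i) = r^(k-i) * r^(n-1)" by (simp add: power_add)
    moreover have "r powr (-(real n - 1)) = inverse (r^(n-1))"
    proof -
      have eq: "real n - 1 = real (n - 1)" using assms(1) by simp
      have "r powr (-(real n - 1)) = inverse (r powr real (n-1))"
        unfolding eq powr_minus by (rule refl)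
      also have "\<dots> = inverse (r^(n-1))" using assms(2) by (simp only: powr_realpow)
      finally show ?thesis .
    qed
    ultimately show ?thesis using assms(2) by simp
  qed
  have lag: "laguerre k (real n - 1) r = r powr (-(real n - 1)) * gpoly m k r / fact k"
  proof -
    have e: "exp r * exp (-r) = 1" by (simp add: exp_minus)
    have "laguerre k (real n - 1) r = exp r * r powr (-(real n - 1)) / fact k * (exp (-r) * gpoly m k r)"
      unfolding laguerre_def fe deriv_formula[OF assms(2), of k m] by simp
    also have "\<dots> = (exp r * exp (-r)) * (r powr (-(real n - 1)) * gpoly m k r) / fact k"
      by (simp add: algebra_simps)
    finally show ?thesis unfolding e by simp
  qed
  have "r powr (-(real n - 1)) * gpoly m k r =
     (\<Sum>i\<le>k. real (k choose i) * (-1)^(k+i) * ff m i * r^(k-i))"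
    unfolding gpoly_def sum_distrib_left
    by (rule sum.cong) (auto simp: pw[symmetric] algebra_simps)
  then have "Gamma (real k + 1) / Gamma (real k + real n) * laguerre k (real n - 1) r =
     (\<Sum>i\<le>k. real (k choose i) * (-1)^(k+i) * r^(k-i) * (ff m i / fact m))"
    unfolding lag g1 g2 by (simp add: sum_divide_distrib[symmetric] algebra_simps)
  also have "\<dots> = Qp n k r"
    unfolding Qp_def m_def[symmetric]
  proof (rule sum.cong)
    fix i assume "i \<in> {..k}"
    then have "ff m i / fact m = 1 / fact (m - i)"
      using ff_fact[of i m] by (auto simp: m_def field_simps)
    then show "real (k choose i) * (-1)^(k+i) * r^(k-i) * (ff m i / fact m) =
       real (k choose i) * (-1)^(k+i) * r^(k-i) / fact (m - i)" by simp
  qed simp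
  finally show ?thesis .
qed

lemma binom_minus1:
  fixes x :: real
  shows "(\<Sum>i<k. real (k choose i) * x^(k-i)) = (1+x)^k - 1"
proof -
  have "(1+x)^k = (\<Sum>i\<le>k. real (k choose i) * 1^i * x^(k-i))"
    by (rule binomial_ring)
  also have "\<dots> = (\<Sum>i<Suc k. real (k choose i) * x^(k-i))"
    by (simp add: lessThan_Suc_atMost)
  also have "\<dots> = (\<Sum>i<k. real (k choose i) * x^(k-i)) + 1"
    by simp
  finally show ?thesis by simp
qed

lemma Qp_bound:
  assumes "x \<ge> 0"
  shows "\<bar>Qp n k x - 1 / fact (n - 1)\<bar> \<le> ((1+x)^k - 1) / fact (n - 1)"
proof -
  define T where "T i = real (k choose i) * (-1)^(k+i) * x^(k-i) / fact (k + (n - 1) - i)" for i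
  have "Qp n k x = (\<Sum>i<Suc k. T i)"
    unfolding Qp_def T_def by (simp add: lessThan_Suc_atMost)
  also have "\<dots> = (\<Sum>i<k. T i) + 1 / fact (n - 1)"
    by (simp add: T_def)
  finally have q: "Qp n k x - 1 / fact (n - 1) = (\<Sum>i<k. T i)" by simp
  have "\<bar>\<Sum>i<k. T i\<bar> \<le> (\<Sum>i<k. \<bar>T i\<bar>)" by (rule sum_abs)
  also have "\<dots> \<le> (\<Sum>i<k. real (k choose i) * x^(k-i) / fact (n - 1))"
  proof (rule sum_mono)
    fix i assume "i \<in> {..<k}"
    have f: "fact (n - 1) \<le> (fact (k + (n - 1) - i) :: real)"
      by (rule fact_mono) (use \<open>i \<in> {..<k}\<close> in simp)
    have "\<bar>T i\<bar> = real (k choose i) * x^(k-i) / fact (k + (n - 1) - i)"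
      using assms by (simp add: T_def abs_mult power_abs)
    also have "\<dots> \<le> real (k choose i) * x^(k-i) / fact (n - 1)"
      by (rule divide_left_mono) (use assms f in auto)
    finally show "\<bar>T i\<bar> \<le> real (k choose i) * x^(k-i) / fact (n - 1)" .
  qed
  also have "\<dots> = ((1+x)^k - 1) / fact (n - 1)"
    by (simp add: sum_divide_distrib[symmetric] binom_minus1)
  finally show ?thesis using q by simp
qed

lemma exp_minus1_bound:
  fixes y :: real
  assumes "y \<ge> 0"
  shows "exp y - 1 \<le> y * exp y"
proof -
  have "1 + (-y) \<le> exp (-y)" by (rule exp_ge_add_one_self)
  then have "(1 - y) * exp y \<le> exp (-y) * exp y" by simp
  then show ?thesis by (simp add: exp_minus algebra_simps)
qed

lemma pow_bound:
  fixes x :: real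
  assumes "x \<ge> 0" "real k * x \<le> 1"
  shows "(1+x)^k - 1 \<le> exp 1 * (real k * x)"
proof -
  have "(1+x)^k \<le> exp x ^ k"
    by (rule power_mono) (use assms exp_ge_add_one_self[of x] in auto)
  also have "\<dots> = exp (real k * x)" by (simp add: exp_of_nat_mult)
  finally have "(1+x)^k - 1 \<le> exp (real k * x) - 1" by simp
  also have "\<dots> \<le> (real k * x) * exp (real k * x)"
    by (rule exp_minus1_bound) (use assms in auto)
  also have "\<dots> \<le> (real k * x) * exp 1"
    by (rule mult_left_mono) (use assms in auto)
  finally show ?thesis by (simp add: mult.commute)
qed

lemma norm_cis_minus_1: "norm (cis a - 1) \<le> \<bar>a\<bar>"
proof -
  have "(norm (cis a - 1))^2 = (cos a - 1)^2 + (sin a)^2" by (simp add: cmod_power2)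
  also have "\<dots> = 2 - 2 * cos a" using sin_cos_squared_add[of a] by (simp add: power2_eq_square algebra_simps)
  also have "cos a = 1 - 2 * sin (a/2) ^ 2" using cos_double_sin[of "a/2"] by simp
  also have "2 - 2 * (1 - 2 * sin (a/2) ^ 2) = 4 * (sin (a/2))^2" by simp
  also have "\<dots> \<le> 4 * (a/2)^2"
  proof -
    have "\<bar>sin (a/2)\<bar>^2 \<le> \<bar>a/2\<bar>^2"
      by (rule power_mono[OF abs_sin_x_le_abs_x]) simp
    then show ?thesis by (simp only: power2_abs)
  qed
  also have "\<dots> = \<bar>a\<bar>^2" by (simp add: power2_eq_square)
  finally show ?thesis by (rule power2_le_imp_le) simp
qed

lemma cos_pow_int_pos: "integral {-pi/2..pi/2} (\<lambda>t. cos t ^ a) > 0"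
proof -
  have c1: "cos (1::real) > 0" using cos_gt_zero_pi[of 1] pi_gt3 by simp
  have "0 < 2 * cos (1::real) ^ a" using c1 by simp
  also have "2 * cos (1::real) ^ a = integral {-1..1::real} (\<lambda>t. cos (1::real) ^ a)" by simp
  also have "\<dots> \<le> integral {-1..1} (\<lambda>t. cos t ^ a)"
  proof (rule integral_le)
    show "(\<lambda>t::real. cos t ^ a) integrable_on {-1..1}"
      by (rule integrable_continuous_interval, intro continuous_intros)
    fix t :: real assume t: "t \<in> {-1..1}"
    have "cos 1 \<le> cos \<bar>t\<bar>"
      using t pi_gt3 by (subst cos_mono_le_eq) auto
    then have "cos 1 \<le> cos t" by simp
    then show "cos 1 ^ a \<le> cos t ^ a" using c1 by (intro power_mono) auto
  qed (rule integrable_const_ivl)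
  also have "\<dots> \<le> integral {-pi/2..pi/2} (\<lambda>t. cos t ^ a)"
  proof (rule integral_subset_le)
    show "{-1..1} \<subseteq> {-pi/2..pi/2::real}" using pi_gt3 by auto
    show "(\<lambda>t::real. cos t ^ a) integrable_on {-1..1}"
      by (rule integrable_continuous_interval, intro continuous_intros)
    show "(\<lambda>t::real. cos t ^ a) integrable_on {-pi/2..pi/2}"
      by (rule integrable_continuous_interval, intro continuous_intros)
    show "\<forall>x\<in>{-pi/2..pi/2}. 0 \<le> cos x ^ a"
      by (auto intro!: zero_le_power cos_ge_zero)
  qed
  finally show ?thesis .
qed

lemma pt_bound:
  fixes q y w D E1 E2 E3 :: real and z :: complex
  assumes "0 \<le> w" "w \<le> 1" "0 \<le> y" "y \<le> 1" "\<bar>q - D\<bar> \<le> E1" "\<bar>y - 1\<bar> \<le> E2"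
    "norm (z - 1) \<le> E3" "norm z = 1" "D \<ge> 0"
  shows "norm (complex_of_real (q * y * w) * z - complex_of_real (D * w)) \<le> E1 + D * (E2 + E3)"
proof -
  have eq: "complex_of_real (q * y * w) * z - complex_of_real (D * w) =
    complex_of_real w * (complex_of_real ((q - D) * y) * z +
       complex_of_real D * (complex_of_real (y - 1) * z + (z - 1)))"
    by (simp add: algebra_simps)
  have n1: "norm (complex_of_real ((q - D) * y) * z) \<le> E1"
  proof -
    have "norm (complex_of_real ((q - D) * y) * z) = \<bar>q - D\<bar> * y"
      using assms by (simp add: norm_mult abs_mult del: of_real_diff)
    also have "\<dots> \<le> E1 * 1" using assms by (intro mult_mono) auto
    finally show ?thesis by simp
  qed
  have n2: "norm (complex_of_real (y - 1) * z + (z - 1)) \<le> E2 + E3"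
  proof -
    have "norm (complex_of_real (y - 1) * z + (z - 1)) \<le> norm (complex_of_real (y - 1) * z) + norm (z - 1)"
      by (rule norm_triangle_ineq)
    also have "norm (complex_of_real (y - 1) * z) = \<bar>y - 1\<bar>" using assms by (simp add: norm_mult del: of_real_diff)
    finally show ?thesis using assms by simp
  qed
  have "norm (complex_of_real ((q - D) * y) * z +
       complex_of_real D * (complex_of_real (y - 1) * z + (z - 1))) \<le> E1 + D * (E2 + E3)"
  proof -
    have "norm (complex_of_real ((q - D) * y) * z +
       complex_of_real D * (complex_of_real (y - 1) * z + (z - 1))) \<le>
       norm (complex_of_real ((q - D) * y) * z) + norm (complex_of_real D * (complex_of_real (y - 1) * z + (z - 1)))"
      by (rule norm_triangle_ineq)
    also have "norm (complex_of_real D * (complex_of_real (y - 1) * z + (z - 1))) =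
       D * norm (complex_of_real (y - 1) * z + (z - 1))" using assms by (simp add: norm_mult)
    also have "\<dots> \<le> D * (E2 + E3)" using n2 assms by (intro mult_left_mono) auto
    finally show ?thesis using n1 by simp
  qed
  moreover have "E1 + D * (E2 + E3) \<ge> 0"
    using assms n1 n2 by (meson add_nonneg_nonneg mult_nonneg_nonneg norm_ge_zero order_trans)
  ultimately show ?thesis
    unfolding eq
  proof -
    assume h1: "norm (complex_of_real ((q - D) * y) * z +
       complex_of_real D * (complex_of_real (y - 1) * z + (z - 1))) \<le> E1 + D * (E2 + E3)"
    let ?X = "complex_of_real ((q - D) * y) * z +
       complex_of_real D * (complex_of_real (y - 1) * z + (z - 1))"
    have "norm (complex_of_real w * ?X) = w * norm ?X"
      using assms(1) by (simp add: norm_mult)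
    also have "\<dots> \<le> norm ?X"
      using assms(1,2) by (intro mult_left_le_one_le) auto
    finally show "norm (complex_of_real w * ?X) \<le> E1 + D * (E2 + E3)" using h1 by simp
  qed
qed

lemma main_bound:
  assumes n1: "n \<ge> 1" and lam0: "lam \<noteq> 0" and small: "2 * (2 * real k + real n) * \<bar>lam\<bar> \<le> 1"
  shows "cmod (R_fun n k lam - complex_of_real (c_const n / fact (n - 1) * integral {-pi/2..pi/2} (\<lambda>t. cos t ^ (n - 1))))
     \<le> (c_const n / fact (n - 1) * exp 1 * (2 * (2 * real k + real n) * \<bar>lam\<bar>)) * pi"
proof -
  define c where "c = c_const n"
  have cpos: "c > 0" unfolding c_def c_const_def using n1
    by (auto intro!: divide_pos_pos mult_pos_pos)
  define a where "a = n - 1"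
  define D where "D = c / fact a"
  have Dpos: "D > 0" unfolding D_def using cpos by simp
  define t where "t = 2 * (2 * real k + real n) * \<bar>lam\<bar>"
  define A where "A = c * Gamma (real k + 1) / Gamma (real k + real n)"
  have Apos: "A > 0" unfolding A_def using cpos n1 by (auto intro!: divide_pos_pos mult_pos_pos)
  define S where "S = {-pi/2..pi/2::real}"
  define X where "X \<theta> = \<bar>lam\<bar> * cos \<theta> / 2" for \<theta>
  define F where "F \<theta> = complex_of_real (laguerre k (real n - 1) (\<bar>lam\<bar> * cos \<theta> / 2)
          * exp (- \<bar>lam\<bar> * cos \<theta> / 4) * (cos \<theta>) ^ (n - 1)) * cis (lam * sin \<theta> / 4)" for \<theta>
  define Hf where "Hf \<theta> = complex_of_real (c * Qp n k (\<bar>lam\<bar> * cos \<theta> / 2)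
          * exp (- \<bar>lam\<bar> * cos \<theta> / 4) * (cos \<theta>) ^ a) * cis (lam * sin \<theta> / 4)" for \<theta>
  define Kf where "Kf \<theta> = complex_of_real (D * cos \<theta> ^ a)" for \<theta>
  have R: "R_fun n k lam = complex_of_real A * integral S F"
    unfolding R_fun_def A_def c_def S_def F_def by simp
  have eqF: "complex_of_real A * F \<theta> = Hf \<theta>" if "\<theta> \<in> S - {-pi/2, pi/2}" for \<theta>
  proof -
    have "cos \<theta> > 0" using that unfolding S_def by (auto intro!: cos_gt_zero_pi)
    then have "\<bar>lam\<bar> * cos \<theta> / 2 > 0" using lam0 by simp
    note L = lag_eq[OF n1 this, of k]
    have "A * laguerre k (real n - 1) (\<bar>lam\<bar> * cos \<theta> / 2) =
       c * (Gamma (real k + 1) / Gamma (real k + real n) * laguerre k (real n - 1) (\<bar>lam\<bar> * cos \<theta> / 2))"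
      unfolding A_def by simp
    also have "\<dots> = c * Qp n k (\<bar>lam\<bar> * cos \<theta> / 2)" by (simp only: L)
    finally have AL: "A * laguerre k (real n - 1) (\<bar>lam\<bar> * cos \<theta> / 2) = c * Qp n k (\<bar>lam\<bar> * cos \<theta> / 2)" .
    then show ?thesis unfolding F_def Hf_def a_def using AL
      by (simp add: mult.assoc[symmetric] of_real_mult[symmetric] del: of_real_mult)
  qed
  have contH: "continuous_on S Hf"
    unfolding Hf_def Qp_def by (intro continuous_intros) auto
  have hasH: "(Hf has_integral integral S Hf) S"
    unfolding S_def by (rule integrable_integral, rule integrable_continuous_interval) (use contH S_def in simp)
  have "((\<lambda>\<theta>. complex_of_real A * F \<theta>) has_integral integral S Hf) S"
    by (rule has_integral_spike_finite[OF _ _ hasH, of "{-pi/2, pi/2}"]) (use eqF in auto)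
  then have "(F has_integral integral S Hf / complex_of_real A) S"
    using has_integral_mult_right_iff[of "complex_of_real A" F] Apos by simp
  then have RH: "R_fun n k lam = integral S Hf"
    unfolding R using Apos by (simp add: integral_unique)
  have "((\<lambda>t. cos t ^ a) has_integral integral S (\<lambda>t. cos t ^ a)) S"
    unfolding S_def by (rule integrable_integral, rule integrable_continuous_interval, intro continuous_intros)
  from has_integral_mult_right[OF has_integral_of_real[OF this], of "complex_of_real D"]
  have hasK: "(Kf has_integral complex_of_real (D * integral S (\<lambda>t. cos t ^ a))) S"
    unfolding Kf_def by simp
  have contK: "continuous_on S Kf" unfolding Kf_def by (intro continuous_intros)
  have diff: "R_fun n k lam - complex_of_real (c_const n / fact (n - 1) * integral {-pi/2..pi/2} (\<lambda>t. cos t ^ (n - 1)))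
      = integral S (\<lambda>\<theta>. Hf \<theta> - Kf \<theta>)"
  proof -
    have "integral S (\<lambda>\<theta>. Hf \<theta> - Kf \<theta>) = integral S Hf - integral S Kf"
      using hasH hasK by (intro integral_diff) auto
    also have "integral S Kf = complex_of_real (D * integral S (\<lambda>t. cos t ^ a))"
      using hasK by (rule integral_unique)
    finally show ?thesis unfolding RH D_def c_def a_def S_def by simp
  qed
  have pt: "norm (Hf \<theta> - Kf \<theta>) \<le> D * exp 1 * t" if th: "\<theta> \<in> S" for \<theta>
  proof -
    have cge: "cos \<theta> \<ge> 0" using th unfolding S_def by (auto intro!: cos_ge_zero)
    have cle: "cos \<theta> \<le> 1" by simp
    define x where "x = \<bar>lam\<bar> * cos \<theta> / 2"
    have x0: "x \<ge> 0" unfolding x_def using cge by simp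
    have xle: "x \<le> \<bar>lam\<bar> / 2" unfolding x_def using cle
      by (simp add: mult_left_le)
    have kx: "real k * x \<le> 1"
    proof -
      have "real k * x \<le> real k * (\<bar>lam\<bar> / 2)" using xle by (intro mult_left_mono) auto
      also have "\<dots> \<le> t" unfolding t_def using n1 by (simp add: algebra_simps mult_right_mono)
      finally show ?thesis using small t_def by simp
    qed
    have E1: "\<bar>c * Qp n k x - D\<bar> \<le> D * exp 1 * real k * (\<bar>lam\<bar> / 2)"
    proof -
      have "\<bar>c * Qp n k x - D\<bar> = c * \<bar>Qp n k x - 1 / fact a\<bar>"
      proof -
        have "c * Qp n k x - c / fact a = c * (Qp n k x - 1 / fact a)" by (simp add: right_diff_distrib)
        then show ?thesis unfolding D_def using cpos by (simp add: abs_mult)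
      qed
      also have "\<dots> \<le> c * (((1+x)^k - 1) / fact a)"
        using Qp_bound[OF x0, of n k] cpos unfolding a_def by (intro mult_left_mono) auto
      also have "\<dots> \<le> c * (exp 1 * (real k * x) / fact a)"
        using pow_bound[OF x0 kx] cpos by (intro mult_left_mono divide_right_mono) auto
      also have "\<dots> = D * exp 1 * real k * x" unfolding D_def by simp
      also have "\<dots> \<le> D * exp 1 * real k * (\<bar>lam\<bar> / 2)"
        using Dpos xle by (intro mult_left_mono) auto
      finally show ?thesis .
    qed
    define y where "y = exp (- \<bar>lam\<bar> * cos \<theta> / 4)"
    have y0: "0 \<le> y" "y \<le> 1" unfolding y_def using cge by auto
    have E2: "\<bar>y - 1\<bar> \<le> \<bar>lam\<bar> / 4"
    proof -
      have "1 + (- \<bar>lam\<bar> * cos \<theta> / 4) \<le> y" unfolding y_def by (rule exp_ge_add_one_self)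
      moreover have "\<bar>lam\<bar> * cos \<theta> \<le> \<bar>lam\<bar>" using cle by (simp add: mult_left_le)
      ultimately show ?thesis using y0 by simp
    qed
    have E3: "norm (cis (lam * sin \<theta> / 4) - 1) \<le> \<bar>lam\<bar> / 4"
    proof -
      have "\<bar>lam * sin \<theta> / 4\<bar> \<le> \<bar>lam\<bar> / 4"
        by (simp add: abs_mult mult_left_le)
      then show ?thesis using norm_cis_minus_1[of "lam * sin \<theta> / 4"] by simp
    qed
    have w: "0 \<le> cos \<theta> ^ a" "cos \<theta> ^ a \<le> 1" using cge cle by (auto intro: power_le_one)
    have "norm (Hf \<theta> - Kf \<theta>) \<le> D * exp 1 * real k * (\<bar>lam\<bar> / 2) + D * (\<bar>lam\<bar> / 4 + \<bar>lam\<bar> / 4)"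
      unfolding Hf_def Kf_def x_def[symmetric] y_def[symmetric]
      by (rule pt_bound[OF w y0 E1 E2 E3]) (use Dpos in auto)
    also have "\<dots> \<le> D * exp 1 * t"
    proof -
      have e1: "exp (1::real) \<ge> 1" by simp
      define L where "L = \<bar>lam\<bar>"
      have L0: "L \<ge> 0" unfolding L_def by simp
      have f1: "0 \<le> exp 1 * real k * L" using L0 by simp
      have f2: "L \<le> exp 1 * L" using mult_right_mono[OF e1 L0] by simp
      have f3: "exp 1 * L \<le> exp 1 * L * real n"
        using mult_left_mono[of 1 "real n" "exp 1 * L"] n1 L0 by simp
      have f4: "exp 1 * t = 4 * (exp 1 * real k * L) + 2 * (exp 1 * L * real n)"
        unfolding t_def L_def by (simp add: algebra_simps)
      have key: "exp 1 * real k * (L / 2) + (L / 4 + L / 4) \<le> exp 1 * t"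
      proof -
        have f5: "exp 1 * real k * (L / 2) = (exp 1 * real k * L) / 2" by simp
        show ?thesis using f1 f2 f3 f4 f5 L0 by linarith
      qed
      have "D * exp 1 * real k * (L / 2) + D * (L / 4 + L / 4) = D * (exp 1 * real k * (L / 2) + (L / 4 + L / 4))"
        by (simp add: algebra_simps)
      also have "\<dots> \<le> D * (exp 1 * t)" using key Dpos by (intro mult_left_mono) auto
      finally show ?thesis unfolding L_def by (simp add: mult.assoc)
    qed
    finally show ?thesis .
  qed
  have B0: "0 \<le> D * exp 1 * t" using Dpos unfolding t_def by simp
  have hD: "((\<lambda>\<theta>. Hf \<theta> - Kf \<theta>) has_integral integral S (\<lambda>\<theta>. Hf \<theta> - Kf \<theta>)) (cbox (-pi/2) (pi/2))"
    using has_integral_diff[OF hasH hasK] unfolding S_def by (simp add: integrable_integral has_integral_integrable)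
  have pb: "\<And>x. x \<in> cbox (- pi / 2) (pi / 2) \<Longrightarrow> cmod (Hf x - Kf x) \<le> D * exp 1 * t"
    using pt unfolding S_def by simp
  have "norm (integral S (\<lambda>\<theta>. Hf \<theta> - Kf \<theta>)) \<le> D * exp 1 * t * pi"
    using has_integral_bound[OF B0 hD pb] by simp
  then show ?thesis unfolding diff by (simp add: D_def c_def a_def t_def)
qed

lemma le_powr_half:
  assumes h0: "0 \<le> (t::real)" and h1: "t \<le> 1"
  shows "t \<le> t powr (1/2)"
proof -
  note h = h0 h1
  have s1: "sqrt t \<le> 1" using h by simp
  have "t = sqrt t * sqrt t" using h by simp
  also have "\<dots> \<le> sqrt t" using s1 h0 by (intro mult_left_le_one_le) auto
  also have "sqrt t = t powr (1/2)" using powr_half_sqrt[OF h0] by simp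
  finally show ?thesis .
qed

theorem lemma4p1:
  fixes n :: nat
  assumes "n \<ge> 1"
  shows "\<exists>\<delta>0 Cn Cn'. 0 < \<delta>0 \<and> \<delta>0 < 1 \<and> Cn > 0 \<and> Cn' > 0 \<and>
    (\<forall>(k::nat) (lam::real). lam \<noteq> 0 \<and> 2 * (2 * real k + real n) * \<bar>lam\<bar> \<le> \<delta>0 \<longrightarrow>
      cmod (R_fun n k lam - complex_of_real Cn)
        \<le> Cn' * (2 * (2 * real k + real n) * \<bar>lam\<bar>) powr (1/2))"
proof -
  define D where "D = c_const n / fact (n - 1)"
  have Dpos: "D > 0" unfolding D_def c_const_def using assms
    by (auto intro!: divide_pos_pos mult_pos_pos)
  define I where "I = integral {-pi/2..pi/2} (\<lambda>t. cos t ^ (n - 1))"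
  have Ipos: "I > 0" unfolding I_def by (rule cos_pow_int_pos)
  show ?thesis
  proof (intro exI conjI allI impI)
    show "0 < (1/2::real)" "(1/2::real) < 1" by auto
    show "D * I > 0" using Dpos Ipos by simp
    show "D * exp 1 * pi > 0" using Dpos by simp
    fix k :: nat and lam :: real
    assume h: "lam \<noteq> 0 \<and> 2 * (2 * real k + real n) * \<bar>lam\<bar> \<le> 1/2"
    define t where "t = 2 * (2 * real k + real n) * \<bar>lam\<bar>"
    have t0: "0 \<le> t" unfolding t_def by simp
    have t1: "t \<le> 1" using h unfolding t_def by simp
    have "cmod (R_fun n k lam - complex_of_real (D * I)) \<le> (D * exp 1 * t) * pi"
      using main_bound[OF assms, of lam k] h t1 unfolding D_def I_def t_def by simp
    also have "\<dots> = (D * exp 1 * pi) * t" by simp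
    also have "\<dots> \<le> (D * exp 1 * pi) * t powr (1/2)"
      using le_powr_half[OF t0 t1] Dpos by (intro mult_left_mono) auto
    finally show "cmod (R_fun n k lam - complex_of_real (D * I))
        \<le> D * exp 1 * pi * (2 * (2 * real k + real n) * \<bar>lam\<bar>) powr (1/2)"
      unfolding t_def .
  qed
qed

end
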